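(* Let $\sigma:\mathbb{R}\to\mathbb{R}$ be an increasing odd homeomorphism and let $A,S$ be Borel subsets of $\mathbb{R}_{\geq0}^2$ with $E_\sigma^{-1}(A)=A$. Then for every measure $\mu$ on $S$ that is $\{h_\sigma,v_\sigma\}$-invariant on $S$ and gives measure zero to the coordinate axes, the measure $\nu=1_{A\cap S}\,\mu$ is also $\{h_\sigma,v_\sigma\}$-invariant on $S$.
   Context: $h_\sigma(x,y)=(x+\sigma^{-1}(y),y)$, $v_\sigma(x,y)=(x,\sigma(x)+y)$. $E_\sigma:\mathbb{R}_{\geq0}^2\to\mathbb{R}_{\geq0}^2$ is $E_\sigma(x,y)=(x-\sigma^{-1}(y),y)$ if $y<\sigma(x)$ and $(x,y-\sigma(x))$ if $y\geq\sigma(x)$. A measure $\mu$ on the Borel subsets of $S$ is $\{h_\sigma,v_\sigma\}$-invariant on $S$ if for every Borel $B\subset S$ and $g\in\{h_\sigma,v_\sigma\}$ with $gB\subset S$, $\mu(gB)=\mu(B)$. *)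

theory Defs
  imports "HOL-Analysis.Analysis"
begin

definition quadrant :: "(real \<times> real) set" where
  "quadrant = {p. 0 \<le> fst p \<and> 0 \<le> snd p}"

definition hmap :: "(real \<Rightarrow> real) \<Rightarrow> real \<times> real \<Rightarrow> real \<times> real" where
  "hmap \<sigma> p = (fst p + inv \<sigma> (snd p), snd p)"

definition vmap :: "(real \<Rightarrow> real) \<Rightarrow> real \<times> real \<Rightarrow> real \<times> real" where
  "vmap \<sigma> p = (fst p, \<sigma> (fst p) + snd p)"

text \<open>E_sigma (meant as a map on the quadrant; formula extended to all points).\<close>
definition Emap :: "(real \<Rightarrow> real) \<Rightarrow> real \<times> real \<Rightarrow> real \<times> real" where
  "Emap \<sigma> p = (if snd p < \<sigma> (fst p) then (fst p - inv \<sigma> (snd p), snd p)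
               else (fst p, snd p - \<sigma> (fst p)))"

definition hv_invariant_on ::
  "(real \<Rightarrow> real) \<Rightarrow> (real \<times> real) set \<Rightarrow> (real \<times> real) measure \<Rightarrow> bool" where
  "hv_invariant_on \<sigma> S M \<longleftrightarrow>
     (\<forall>B \<in> sets M. \<forall>g \<in> {hmap \<sigma>, vmap \<sigma>}.
        g ` B \<subseteq> S \<longrightarrow> emeasure M (g ` B) = emeasure M B)"

end

theory Submission
  imports Defs
begin

theorem lemma10:
  fixes \<sigma> :: "real \<Rightarrow> real"
    and A S :: "(real \<times> real) set"
  assumes "strict_mono \<sigma>"
    and "\<And>x. \<sigma> (- x) = - \<sigma> x"
    and "\<exists>g. homeomorphism UNIV UNIV \<sigma> g"
    and "A \<in> sets borel" and "A \<subseteq> quadrant"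
    and "S \<in> sets borel" and "S \<subseteq> quadrant"
    and "Emap \<sigma> -` A \<inter> quadrant = A"
  shows "\<forall>M. sets M = sets (restrict_space borel S)
           \<longrightarrow> hv_invariant_on \<sigma> S M
           \<longrightarrow> emeasure M {p \<in> S. fst p = 0 \<or> snd p = 0} = 0
           \<longrightarrow> hv_invariant_on \<sigma> S (density M (indicator (A \<inter> S)))"
proof (intro allI impI)
  fix M :: "(real \<times> real) measure"
  assume sM: "sets M = sets (restrict_space borel S)"
    and inv: "hv_invariant_on \<sigma> S M"
    and Z0: "emeasure M {p \<in> S. fst p = 0 \<or> snd p = 0} = 0"
  define Z where "Z = {p \<in> S. fst p = 0 \<or> snd p = 0}"
  obtain g where hg: "homeomorphism UNIV UNIV \<sigma> g" using assms(3) by blast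
  have gs: "\<And>x. g (\<sigma> x) = x" and sg: "\<And>y. \<sigma> (g y) = y"
    using hg unfolding homeomorphism_def by auto
  have cs: "continuous_on UNIV \<sigma>" and cg: "continuous_on UNIV g"
    using hg unfolding homeomorphism_def by auto
  have invg: "inv \<sigma> y = g y" for y
    by (metis gs sg inv_f_f injI)
  have setsM: "X \<in> sets M \<longleftrightarrow> X \<in> sets borel \<and> X \<subseteq> S" for X
    unfolding sM using assms(6) by (subst sets_restrict_space_iff) auto
  have AS: "A \<inter> S \<in> sets M" using setsM assms(4,6) by auto
  have Zb: "Z \<in> sets borel"
  proof -
    have "Z = S \<inter> ((\<lambda>p. fst p) -` {0} \<union> (\<lambda>p. snd p) -` {0})" unfolding Z_def by auto
    moreover have "(\<lambda>p::real\<times>real. fst p) -` {0} \<in> sets borel"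
      using measurable_sets[OF borel_measurable_continuous_onI[OF continuous_on_fst[OF continuous_on_id]], of "{0::real}"] by auto
    moreover have "(\<lambda>p::real\<times>real. snd p) -` {0} \<in> sets borel"
      using measurable_sets[OF borel_measurable_continuous_onI[OF continuous_on_snd[OF continuous_on_id]], of "{0::real}"] by auto
    ultimately show ?thesis using assms(6) by auto
  qed
  have ZM: "Z \<in> sets M" using setsM Zb Z_def by auto
  have nu: "emeasure (density M (indicator (A \<inter> S))) X = emeasure M (X \<inter> A)"
    if "X \<in> sets M" for X
  proof -
    have "emeasure (density M (indicator (A \<inter> S))) X
        = (\<integral>\<^sup>+ x. indicator (A \<inter> S) x * indicator X x \<partial>M)"
      using that AS by (intro emeasure_density) auto
    also have "\<dots> = (\<integral>\<^sup>+ x. indicator (X \<inter> (A \<inter> S)) x \<partial>M)"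
      by (intro nn_integral_cong) (auto simp: indicator_def)
    also have "\<dots> = emeasure M (X \<inter> (A \<inter> S))"
      using that AS by (intro nn_integral_indicator) auto
    also have "X \<inter> (A \<inter> S) = X \<inter> A" using that setsM by auto
    finally show ?thesis .
  qed
  show "hv_invariant_on \<sigma> S (density M (indicator (A \<inter> S)))"
    unfolding hv_invariant_on_def
  proof (intro ballI impI)
    fix B g' assume BM: "B \<in> sets (density M (indicator (A \<inter> S)))"
      and gg: "g' \<in> {hmap \<sigma>, vmap \<sigma>}" and gB: "g' ` B \<subseteq> S"
    have BM': "B \<in> sets M" using BM by simp
    have BS: "B \<subseteq> S" and Bb: "B \<in> sets borel" using BM' setsM by auto
    have BQ: "B \<subseteq> quadrant" using BS assms(7) by auto
    have BA: "B \<inter> A \<in> sets M" using setsM Bb assms(4) BS by auto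
    have EA: "Emap \<sigma> q \<in> A" if "q \<in> A" for q using that assms(8) by auto
    have AE: "q \<in> A" if "Emap \<sigma> q \<in> A" "q \<in> S" for q
      using that assms(8) assms(7) by auto
    show "emeasure (density M (indicator (A \<inter> S))) (g' ` B)
        = emeasure (density M (indicator (A \<inter> S))) B"
    proof (cases "g' = vmap \<sigma>")
      case True
      define vi where "vi = (\<lambda>p::real\<times>real. (fst p, snd p - \<sigma> (fst p)))"
      have "g' ` B = vi -` B \<inter> space borel"
      proof -
        have i1: "vi (g' p) = p" "g' (vi p) = p" for p
          unfolding True vi_def vmap_def by auto
        show ?thesis using i1 by (auto, metis rev_image_eqI)
      qed
      moreover have "vi \<in> borel_measurable borel"
        unfolding vi_def
        by (intro borel_measurable_continuous_onI continuous_intros continuous_on_compose2[OF cs]) auto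
      ultimately have "g' ` B \<in> sets borel" using Bb by (metis measurable_sets)
      hence gBM: "g' ` B \<in> sets M" using setsM gB by auto
      have Ep: "Emap \<sigma> (vmap \<sigma> p) = p" if "p \<in> quadrant" for p
        using that unfolding Emap_def vmap_def quadrant_def by auto
      have eq: "g' ` B \<inter> A = g' ` (B \<inter> A)"
      proof (intro equalityI subsetI)
        fix q assume "q \<in> g' ` B \<inter> A"
        then obtain p where "p \<in> B" "q = g' p" "g' p \<in> A" by auto
        then show "q \<in> g' ` (B \<inter> A)" using EA[of "g' p"] Ep[of p] BQ True by auto
      next
        fix q assume "q \<in> g' ` (B \<inter> A)"
        then obtain p where p: "p \<in> B" "p \<in> A" "q = g' p" by auto
        then show "q \<in> g' ` B \<inter> A" using AE[of "g' p"] Ep[of p] BQ True gB[THEN subsetD, OF imageI[OF p(1)]] by auto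
      qed
      have "g' ` (B \<inter> A) \<subseteq> S" using gB by auto
      then have "emeasure M (g' ` (B \<inter> A)) = emeasure M (B \<inter> A)"
        using inv BA True unfolding hv_invariant_on_def by auto
      then show ?thesis using nu[OF gBM] nu[OF BM'] eq by simp
    next
      case False
      then have T: "g' = hmap \<sigma>" using gg by auto
      define hi where "hi = (\<lambda>p::real\<times>real. (fst p - g (snd p), snd p))"
      have himg: "g' ` C = hi -` C \<inter> space borel" for C
      proof -
        have i1: "hi (g' p) = p" "g' (hi p) = p" for p
          unfolding T hi_def hmap_def invg by (auto simp: gs sg)
        show ?thesis using i1 by (auto, metis rev_image_eqI)
      qed
      have hmeas: "hi \<in> borel_measurable borel"
        unfolding hi_def
        by (intro borel_measurable_continuous_onI continuous_intros continuous_on_compose2[OF cg]) auto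
      hence hb: "C \<in> sets borel \<Longrightarrow> g' ` C \<in> sets borel" for C
        unfolding himg using measurable_sets[OF hmeas] by blast
      have "g' ` B \<in> sets borel" using Bb hb by blast
      hence gBM: "g' ` B \<in> sets M" using setsM gB by auto
      have Ep: "Emap \<sigma> (hmap \<sigma> p) = p" if "p \<in> quadrant" "fst p \<noteq> 0" for p
      proof -
        have "fst p > 0" using that unfolding quadrant_def by auto
        hence "\<sigma> (g (snd p)) < \<sigma> (fst p + g (snd p))" using assms(1)
          by (simp add: strict_mono_less)
        hence lt: "snd p < \<sigma> (fst p + g (snd p))" by (simp only: sg)
        show ?thesis unfolding Emap_def hmap_def invg using lt by simp
      qed
      have BZ: "B \<inter> Z \<in> sets M" using BM' ZM by auto
      have hBZ: "g' ` (B \<inter> Z) \<subseteq> S" using gB by auto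
      have n0: "emeasure M (g' ` (B \<inter> Z)) = 0"
      proof -
        have "emeasure M (g' ` (B \<inter> Z)) = emeasure M (B \<inter> Z)"
          using inv BZ hBZ gg unfolding hv_invariant_on_def by auto
        also have "\<dots> \<le> emeasure M Z" using ZM by (intro emeasure_mono) auto
        finally show ?thesis using Z0 Z_def by simp
      qed
      have s1: "g' ` B \<inter> A \<subseteq> g' ` (B \<inter> A) \<union> g' ` (B \<inter> Z)"
      proof
        fix q assume "q \<in> g' ` B \<inter> A"
        then obtain p where p: "p \<in> B" "q = g' p" "g' p \<in> A" by auto
        show "q \<in> g' ` (B \<inter> A) \<union> g' ` (B \<inter> Z)"
        proof (cases "fst p = 0")
          case True
          then have "p \<in> B \<inter> Z" using p BS unfolding Z_def by auto
          then show ?thesis using p by auto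
        next
          case False
          then have "Emap \<sigma> q = p" using Ep[of p] p BQ T by auto
          then have "p \<in> A" using EA[of q] p by auto
          then show ?thesis using p by auto
        qed
      qed
      have s2: "g' ` (B \<inter> A) \<subseteq> (g' ` B \<inter> A) \<union> g' ` (B \<inter> Z)"
      proof
        fix q assume "q \<in> g' ` (B \<inter> A)"
        then obtain p where p: "p \<in> B" "q = g' p" "p \<in> A" by auto
        have qS: "q \<in> S" using p gB by auto
        show "q \<in> (g' ` B \<inter> A) \<union> g' ` (B \<inter> Z)"
        proof (cases "fst p = 0")
          case True
          then have "p \<in> B \<inter> Z" using p BS unfolding Z_def by auto
          then show ?thesis using p by auto
        next
          case False
          then have "Emap \<sigma> q = p" using Ep[of p] p BQ T by auto
          then have "q \<in> A" using AE[of q] p qS by auto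
          then show ?thesis using p by auto
        qed
      qed
      have m1: "g' ` (B \<inter> A) \<in> sets M" using hb[of "B \<inter> A"] BA setsM gB by auto
      have m2: "g' ` (B \<inter> Z) \<in> sets M" using hb[of "B \<inter> Z"] BZ setsM hBZ by auto
      have gBA: "g' ` B \<inter> A \<in> sets M" using gBM assms(4) setsM by auto
      have "emeasure M (g' ` B \<inter> A) \<le> emeasure M (g' ` (B \<inter> A) \<union> g' ` (B \<inter> Z))"
        using s1 m1 m2 by (intro emeasure_mono) auto
      also have "\<dots> \<le> emeasure M (g' ` (B \<inter> A)) + emeasure M (g' ` (B \<inter> Z))"
        using m1 m2 by (intro emeasure_subadditive) auto
      finally have le1: "emeasure M (g' ` B \<inter> A) \<le> emeasure M (g' ` (B \<inter> A))" using n0 by simp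
      have "emeasure M (g' ` (B \<inter> A)) \<le> emeasure M ((g' ` B \<inter> A) \<union> g' ` (B \<inter> Z))"
        using s2 gBA m2 by (intro emeasure_mono) auto
      also have "\<dots> \<le> emeasure M (g' ` B \<inter> A) + emeasure M (g' ` (B \<inter> Z))"
        using gBA m2 by (intro emeasure_subadditive) auto
      finally have le2: "emeasure M (g' ` (B \<inter> A)) \<le> emeasure M (g' ` B \<inter> A)" using n0 by simp
      have "g' ` (B \<inter> A) \<subseteq> S" using gB by auto
      then have "emeasure M (g' ` (B \<inter> A)) = emeasure M (B \<inter> A)"
        using inv BA gg unfolding hv_invariant_on_def by auto
      moreover have "emeasure M (g' ` B \<inter> A) = emeasure M (g' ` (B \<inter> A))"
        using le1 le2 by (rule antisym)
      ultimately show ?thesis unfolding nu[OF gBM] nu[OF BM'] by simp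
    qed
  qed
qed

end
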